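(* Let $n\ge1$ and let $\mathcal{T}:\mathrm{Cvx}(\mathbb{R}^n)\to\mathrm{Cvx}(\mathbb{R}^n)$ satisfy: (1) for all $\phi,\psi\in\mathrm{Cvx}(\mathbb{R}^n)$, $\phi\le\psi$ if and only if $\mathcal{T}\phi\le\mathcal{T}\psi$; (2) if $\phi\in\mathrm{Cvx}(\mathbb{R}^n)$ is positively homogeneous (i.e. $\phi(\lambda x)=\lambda\phi(x)$ for all $x$ and all $\lambda>0$), then $\mathcal{T}\phi=\phi$; (3) the image $\mathrm{Im}\,\mathcal{T}=\{\mathcal{T}\phi:\phi\in\mathrm{Cvx}(\mathbb{R}^n)\}$ is closed under pointwise addition, in the sense that whenever $\phi',\psi'\in\mathrm{Im}\,\mathcal{T}$ and $\phi'+\psi'$ is finite at some point, then $\phi'+\psi'\in\mathrm{Im}\,\mathcal{T}$. Then there is a constant $C>0$ such that $(\mathcal{T}\phi)(x)=\frac{1}{C}\phi(Cx)$ for all $\phi\in\mathrm{Cvx}(\mathbb{R}^n)$ and all $x\in\mathbb{R}^n$.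
   Context: $\mathrm{Cvx}(\mathbb{R}^n)$ denotes the set of functions $\phi:\mathbb{R}^n\to(-\infty,\infty]$ that are convex, lower semicontinuous, and finite at at least one point. For functions, $\phi\le\psi$ means $\phi(x)\le\psi(x)$ for all $x$. *)

theory Defs
  imports "HOL-Analysis.Analysis" "HOL-Library.Extended_Real"
begin

text \<open>Functions R^n -> (-infinity, +infinity], modelled as ereal-valued functions
  never taking the value -infinity.\<close>

definition ecvx_on :: "('a::real_vector \<Rightarrow> ereal) \<Rightarrow> bool" where
  "ecvx_on \<phi> \<longleftrightarrow> convex {(x, t::real). \<phi> x \<le> ereal t}"

definition elsc :: "('a::topological_space \<Rightarrow> ereal) \<Rightarrow> bool" where
  "elsc \<phi> \<longleftrightarrow> (\<forall>x. \<phi> x \<le> Liminf (at x) \<phi>)"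

definition Cvx :: "('a::real_normed_vector \<Rightarrow> ereal) set" where
  "Cvx = {\<phi>. (\<forall>x. \<phi> x \<noteq> -\<infinity>) \<and> ecvx_on \<phi> \<and> elsc \<phi> \<and> (\<exists>x. \<phi> x \<noteq> \<infinity>)}"

definition pos_homogeneous :: "('a::real_vector \<Rightarrow> ereal) \<Rightarrow> bool" where
  "pos_homogeneous \<phi> \<longleftrightarrow> (\<forall>x. \<forall>c::real. c > 0 \<longrightarrow> \<phi> (c *\<^sub>R x) = ereal c * \<phi> x)"

end

theory Submission
  imports Defs
begin


definition Pt :: "'a::euclidean_space \<Rightarrow> real \<Rightarrow> 'a \<Rightarrow> ereal" where
  "Pt a s = (\<lambda>x. if x = a then ereal s else \<infinity>)"
definition lin :: "'a::euclidean_space \<Rightarrow> 'a \<Rightarrow> ereal" where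
  "lin y = (\<lambda>x. ereal (inner y x))"
definition cst :: "real \<Rightarrow> 'a::euclidean_space \<Rightarrow> ereal" where
  "cst c = (\<lambda>x. ereal c)"

lemma Pt_Cvx: "Pt a s \<in> Cvx"
proof -
  have "{(x, t::real). Pt a s x \<le> ereal t} = {a} \<times> {s..}"
    by (auto simp: Pt_def split: if_splits)
  hence cv: "ecvx_on (Pt a s)" unfolding ecvx_on_def by (simp add: convex_Times)
  have ls: "elsc (Pt a s)" unfolding elsc_def
  proof
    fix x :: 'a
    have "\<forall>\<^sub>F y in at x. y \<noteq> a"
    proof (cases "x = a")
      case True then show ?thesis by (simp add: eventually_at_filter)
    next
      case False
      have "\<forall>\<^sub>F y in nhds x. y \<in> - {a}" using False
        by (intro eventually_nhds_in_open) auto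
      then show ?thesis unfolding eventually_at_filter by (auto elim: eventually_mono)
    qed
    hence "\<forall>\<^sub>F y in at x. Pt a s y = \<infinity>" by (auto simp: Pt_def elim: eventually_mono)
    hence "Liminf (at x) (Pt a s) = \<infinity>"
      by (simp add: le_Liminf_iff order_antisym_conv[symmetric] eventually_mono)
    thus "Pt a s x \<le> Liminf (at x) (Pt a s)" by simp
  qed
  show ?thesis unfolding Cvx_def using cv ls by (auto simp: Pt_def intro: exI[of _ a])
qed

lemma lin_Cvx: "lin y \<in> Cvx"
proof -
  have "convex {(x, t::real). inner y x \<le> t}"
    unfolding convex_def
  proof (clarsimp)
    fix x t x' t' and u v :: real assume "inner y x \<le> t" "inner y x' \<le> t'" "0 \<le> u" "0 \<le> v" "u + v = 1"
    thus "inner y (u *\<^sub>R x + v *\<^sub>R x') \<le> u * t + v * t'"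
      by (simp add: inner_add_right add_mono mult_left_mono)
  qed
  hence cv: "ecvx_on (lin y)" unfolding ecvx_on_def lin_def by simp
  have ls: "elsc (lin y)" unfolding elsc_def
  proof
    fix x :: 'a
    have "((\<lambda>z. ereal (inner y z)) \<longlongrightarrow> ereal (inner y x)) (at x)"
      by (intro tendsto_ereal tendsto_intros)
    hence "Liminf (at x) (lin y) = lin y x" unfolding lin_def
      by (intro lim_imp_Liminf) auto
    thus "lin y x \<le> Liminf (at x) (lin y)" by simp
  qed
  show ?thesis unfolding Cvx_def using cv ls by (auto simp: lin_def)
qed

lemma lin_hom: "pos_homogeneous (lin y)"
  unfolding pos_homogeneous_def lin_def by simp

lemma cst_Cvx: "cst c \<in> Cvx"
proof -
  have "{(x::'a, t::real). cst c x \<le> ereal t} = UNIV \<times> {c..}"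
    by (auto simp: cst_def)
  hence cv: "ecvx_on (cst c :: 'a \<Rightarrow> ereal)" unfolding ecvx_on_def by (simp add: convex_Times)
  have ls: "elsc (cst c :: 'a \<Rightarrow> ereal)" unfolding elsc_def cst_def
    by (simp add: Liminf_const)
  show ?thesis unfolding Cvx_def using cv ls by (auto simp: cst_def)
qed

lemma cst0: "cst 0 = lin 0" by (simp add: cst_def lin_def fun_eq_iff zero_ereal_def)

lemma cvx_ineq:
  assumes "\<phi> \<in> Cvx" "\<phi> x \<le> ereal a" "\<phi> y \<le> ereal b" "0 \<le> u" "u \<le> 1"
  shows "\<phi> ((1 - u) *\<^sub>R x + u *\<^sub>R y) \<le> ereal ((1 - u) * a + u * b)"
proof -
  have c: "convex {(x, t::real). \<phi> x \<le> ereal t}" using assms(1) by (simp add: Cvx_def ecvx_on_def)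
  have "(1 - u) *\<^sub>R (x, a) + u *\<^sub>R (y, b) \<in> {(x, t::real). \<phi> x \<le> ereal t}"
    using assms by (intro convexD[OF c]) auto
  thus ?thesis by simp
qed




lemma bdd_const:
  assumes phi: "\<phi> \<in> Cvx" and le: "\<And>x. \<phi> x \<le> 0"
  shows "\<exists>K. \<phi> = cst K"
proof -
  have fin: "\<And>x. \<phi> x = ereal (real_of_ereal (\<phi> x))"
  proof -
    fix x have "\<phi> x \<noteq> -\<infinity>" using phi unfolding Cvx_def by auto
    moreover have "\<phi> x \<noteq> \<infinity>" using le[of x] by auto
    ultimately show "\<phi> x = ereal (real_of_ereal (\<phi> x))" by (cases "\<phi> x") auto
  qed
  define f where "f x = real_of_ereal (\<phi> x)" for x
  have fle: "f x \<le> 0" for x using le[of x] fin[of x] by (simp add: f_def real_of_ereal_le_0)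
  have "f y \<le> f x" for x y
  proof (rule ccontr)
    assume "\<not> f y \<le> f x"
    hence d: "f y - f x > 0" by simp
    define u where "u = min 1 ((f y - f x) / (2 * (- f x) + 1))"
    have u0: "0 < u" "u \<le> 1" using d fle[of x] by (auto simp: u_def)
    define z where "z = x + (1/u) *\<^sub>R (y - x)"
    have yz: "(1 - u) *\<^sub>R x + u *\<^sub>R z = y" using u0
      by (simp add: z_def algebra_simps)
    have "\<phi> y \<le> ereal ((1 - u) * f x + u * f z)"
      using cvx_ineq[OF phi, of x "f x" z "f z" u] fin u0 yz by (simp add: f_def)
    hence "f y \<le> (1 - u) * f x + u * f z" using fin[of y] unfolding f_def by (metis ereal_less_eq(3))
    also have "\<dots> \<le> f x - u * f x" using fle[of z] u0 by (simp add: algebra_simps mult_nonneg_nonpos)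
    finally have a: "f y - f x \<le> u * (- f x)" by simp
    have "u * (- f x) \<le> (f y - f x) / (2 * (- f x) + 1) * (- f x)"
      using fle[of x] by (intro mult_right_mono) (auto simp: u_def)
    also have "\<dots> < f y - f x"
    proof -
      have "(f y - f x) * (- f x) < (f y - f x) * (2 * (- f x) + 1)"
        using d fle[of x] by (intro mult_strict_left_mono) auto
      thus ?thesis using fle[of x] by (simp add: field_simps)
    qed
    finally show False using a by simp
  qed
  hence "\<And>x y. f x = f y" by (meson order_antisym)
  hence "\<phi> = cst (f 0)" unfolding cst_def fun_eq_iff f_def by (metis fin)
  thus ?thesis by blast
qed




definition lp :: "'a::euclidean_space \<Rightarrow> 'a \<Rightarrow> real" where
  "lp p x = inner p x / inner p p"

lemma le_Pt: "f \<le> Pt a s \<longleftrightarrow> f a \<le> ereal s"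
  by (auto simp: le_fun_def Pt_def)

lemma Cvx_fin: "\<phi> \<in> Cvx \<Longrightarrow> \<exists>x. \<phi> x \<noteq> \<infinity>" by (auto simp: Cvx_def)
lemma Cvx_nm: "\<phi> \<in> Cvx \<Longrightarrow> \<phi> x \<noteq> -\<infinity>" by (auto simp: Cvx_def)

lemma above_Pt:
  assumes "\<psi> \<in> Cvx" "Pt a s \<le> \<psi>"
  shows "\<psi> = Pt a (real_of_ereal (\<psi> a)) \<and> s \<le> real_of_ereal (\<psi> a)"
proof -
  have inf: "\<psi> x = \<infinity>" if "x \<noteq> a" for x
    using assms(2) that by (auto simp: le_fun_def Pt_def dest!: spec[of _ x])
  obtain x where "\<psi> x \<noteq> \<infinity>" using Cvx_fin[OF assms(1)] by blast
  with inf have fa: "\<psi> a \<noteq> \<infinity>" by metis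
  have "\<psi> a \<noteq> -\<infinity>" using Cvx_nm[OF assms(1)] .
  with fa have e: "\<psi> a = ereal (real_of_ereal (\<psi> a))" by (cases "\<psi> a") auto
  have "ereal s \<le> \<psi> a" using assms(2) by (auto simp: le_fun_def Pt_def dest!: spec[of _ a])
  hence "s \<le> real_of_ereal (\<psi> a)" using e by (metis ereal_less_eq(3))
  moreover have "\<psi> = Pt a (real_of_ereal (\<psi> a))"
    using inf e by (auto simp: Pt_def fun_eq_iff)
  ultimately show ?thesis by blast
qed

lemma lin_lp: "lin ((c / inner p p) *\<^sub>R p) x = ereal (c * lp p x)"
  by (simp add: lin_def lp_def)

lemma lp_self: "p \<noteq> 0 \<Longrightarrow> lp p (t *\<^sub>R p) = t"
  by (simp add: lp_def)

locale TT =
  fixes T :: "('a::euclidean_space \<Rightarrow> ereal) \<Rightarrow> ('a \<Rightarrow> ereal)"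
  assumes maps: "\<And>\<phi>. \<phi> \<in> Cvx \<Longrightarrow> T \<phi> \<in> Cvx"
    and order_iso: "\<And>\<phi> \<psi>. \<phi> \<in> Cvx \<Longrightarrow> \<psi> \<in> Cvx \<Longrightarrow> (\<phi> \<le> \<psi> \<longleftrightarrow> T \<phi> \<le> T \<psi>)"
    and homog_fixed: "\<And>\<phi>. \<phi> \<in> Cvx \<Longrightarrow> pos_homogeneous \<phi> \<Longrightarrow> T \<phi> = \<phi>"
    and image_add: "\<And>\<phi>' \<psi>'. \<phi>' \<in> T ` Cvx \<Longrightarrow> \<psi>' \<in> T ` Cvx \<Longrightarrow>
                      (\<exists>x. \<phi>' x + \<psi>' x \<noteq> \<infinity>) \<Longrightarrow> (\<lambda>x. \<phi>' x + \<psi>' x) \<in> T ` Cvx"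
begin

lemma Tlin: "T (lin y) = lin y" using homog_fixed lin_Cvx lin_hom by blast

lemma Tcst0: "T (cst 0) = cst 0" by (simp add: cst0 Tlin)

lemma lin_in: "lin y \<in> T ` Cvx" using Tlin lin_Cvx by (metis image_eqI)

lemma sum_in:
  assumes "\<phi> \<in> Cvx" "\<psi> \<in> Cvx" "T \<phi> x \<noteq> \<infinity>" "T \<psi> x \<noteq> \<infinity>"
  shows "(\<lambda>x. T \<phi> x + T \<psi> x) \<in> T ` Cvx"
proof (rule image_add)
  show "T \<phi> \<in> T ` Cvx" "T \<psi> \<in> T ` Cvx" using assms by auto
  show "\<exists>x. T \<phi> x + T \<psi> x \<noteq> \<infinity>" using assms by (intro exI[of _ x]) simp
qed

lemma lin_le_TP: "lin y \<le> T (Pt p s) \<longleftrightarrow> inner y p \<le> s"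
proof -
  have "lin y \<le> T (Pt p s) \<longleftrightarrow> lin y \<le> Pt p s"
    using order_iso[OF lin_Cvx Pt_Cvx] Tlin by metis
  thus ?thesis by (simp add: le_Pt lin_def)
qed

lemma ray:
  assumes p: "p \<noteq> 0" and fin: "T (Pt p s) x \<noteq> \<infinity>"
  shows "x = lp p x *\<^sub>R p \<and> 0 \<le> lp p x"
proof -
  let ?g = "T (Pt p s)"
  have "?g x \<noteq> -\<infinity>" using Cvx_nm maps Pt_Cvx by blast
  with fin obtain v where v: "?g x = ereal v" by (cases "?g x") auto
  have bnd: "inner y x \<le> v" if "inner y p \<le> s" for y
  proof -
    have "lin y \<le> ?g" using lin_le_TP that by blast
    hence "lin y x \<le> ?g x" by (simp add: le_fun_def)
    thus ?thesis using v by (simp add: lin_def)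
  qed
  define \<alpha> where "\<alpha> = lp p x"
  define z where "z = x - \<alpha> *\<^sub>R p"
  have pp: "inner p p > 0" using p by simp
  have zp: "inner z p = 0" using pp by (simp add: z_def \<alpha>_def lp_def inner_diff_left inner_diff_right inner_commute)
  have "z = 0"
  proof (rule ccontr)
    assume z0: "z \<noteq> 0"
    hence zz: "inner z z > 0" by simp
    define R where "R = (v - s * \<alpha> + 1) / inner z z"
    define y where "y = (s / inner p p) *\<^sub>R p + R *\<^sub>R z"
    have "inner y p = s" using pp zp by (simp add: y_def inner_add_left)
    hence "inner y x \<le> v" by (intro bnd) simp
    moreover have "inner y x = s * \<alpha> + R * inner z z"
    proof -
      have x: "x = z + \<alpha> *\<^sub>R p" by (simp add: z_def)
      have 1: "inner y x = (s / inner p p) * inner p x + R * inner z x"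
        by (simp add: y_def inner_add_left)
      have 2: "inner p x = \<alpha> * inner p p" using pp by (simp add: \<alpha>_def lp_def)
      have 3: "inner z x = inner z z" using zp by (subst x) (simp add: inner_add_right)
      show ?thesis using pp by (simp add: 1 2 3)
    qed
    moreover have "R * inner z z = v - s * \<alpha> + 1" using zz by (simp add: R_def)
    ultimately show False by simp
  qed
  hence x: "x = \<alpha> *\<^sub>R p" by (simp add: z_def)
  have "0 \<le> \<alpha>"
  proof (rule ccontr)
    assume "\<not> 0 \<le> \<alpha>"
    hence a: "\<alpha> < 0" by simp
    define R where "R = max (- s) ((v + 1) / (- \<alpha>))"
    define y where "y = (- R / inner p p) *\<^sub>R p"
    have "inner y p = - R" using pp by (simp add: y_def)
    hence "inner y x \<le> v" by (intro bnd) (simp add: R_def)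
    moreover have "inner y x = R * (- \<alpha>)" using pp by (simp add: y_def x)
    moreover have "R * (- \<alpha>) \<ge> v + 1"
    proof -
      have "R * (- \<alpha>) \<ge> (v + 1) / (- \<alpha>) * (- \<alpha>)" using a by (intro mult_right_mono) (auto simp: R_def)
      thus ?thesis using a by simp
    qed
    ultimately show False by simp
  qed
  thus ?thesis unfolding \<alpha>_def[symmetric] using x by blast
qed

end



lemma ereal_add_le_iff: "g \<noteq> -\<infinity> \<Longrightarrow> ereal a \<le> g + ereal b \<longleftrightarrow> ereal (a - b) \<le> g"
  by (cases g) auto

context TT begin

lemma TP_Cvx: "T (Pt p s) \<in> Cvx" using maps Pt_Cvx by blast

lemma lin_le_TP_pt: "lin y \<le> T (Pt p s) \<Longrightarrow> ereal (inner y x) \<le> T (Pt p s) x"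
  by (auto simp: le_fun_def lin_def)

lemma shift:
  assumes p: "p \<noteq> 0" and c: "0 \<le> c"
  shows "T (Pt p (s + c)) = (\<lambda>x. T (Pt p s) x + ereal (c * lp p x))"
proof -
  let ?g = "T (Pt p s)"
  define w where "w = (c / inner p p) *\<^sub>R p"
  define F where "F = (\<lambda>x. ?g x + lin w x)"
  have Fe: "F = (\<lambda>x. T (Pt p s) x + ereal (c * lp p x))"
    by (simp add: F_def w_def lin_lp)
  obtain x0 where x0: "?g x0 \<noteq> \<infinity>" using Cvx_fin[OF TP_Cvx] by blast
  have "F \<in> T ` Cvx" unfolding F_def
  proof (rule image_add)
    show "?g \<in> T ` Cvx" using Pt_Cvx by blast
    show "lin w \<in> T ` Cvx" by (rule lin_in)
    show "\<exists>x. ?g x + lin w x \<noteq> \<infinity>" using x0 by (intro exI[of _ x0]) (simp add: lin_def)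
  qed
  then obtain \<psi> where psi: "\<psi> \<in> Cvx" "F = T \<psi>" by blast
  have "?g \<le> F"
  proof (rule le_funI)
    fix x
    show "?g x \<le> F x"
    proof (cases "?g x = \<infinity>")
      case True thus ?thesis by (simp add: F_def lin_def)
    next
      case False
      with ray[OF p] have "0 \<le> lp p x" by blast
      hence "0 \<le> c * lp p x" using c by simp
      thus ?thesis unfolding Fe by (simp add: add_increasing2)
    qed
  qed
  hence "Pt p s \<le> \<psi>" using order_iso[OF Pt_Cvx psi(1)] psi(2) by simp
  from above_Pt[OF psi(1) this] obtain s' where ps: "\<psi> = Pt p s'" by blast
  have pp: "inner p p > 0" using p by simp
  have key: "inner y p \<le> s' \<longleftrightarrow> inner y p \<le> s + c" for y
  proof -
    have "inner y p \<le> s' \<longleftrightarrow> lin y \<le> F" using lin_le_TP psi(2) ps by simp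
    also have "\<dots> \<longleftrightarrow> lin (y - w) \<le> ?g"
      unfolding F_def le_fun_def lin_def
      using Cvx_nm[OF TP_Cvx] by (simp add: ereal_add_le_iff inner_diff_left)
    also have "\<dots> \<longleftrightarrow> inner (y - w) p \<le> s" by (rule lin_le_TP)
    also have "\<dots> \<longleftrightarrow> inner y p \<le> s + c" using pp by (simp add: w_def inner_diff_left) arith
    finally show ?thesis .
  qed
  have "s' = s + c"
  proof -
    have e: "inner ((t / inner p p) *\<^sub>R p) p = t" for t using pp by simp
    show ?thesis using key[of "(s' / inner p p) *\<^sub>R p"] key[of "((s + c) / inner p p) *\<^sub>R p"]
      unfolding e by simp
  qed
  thus ?thesis using psi(2) ps Fe by simp
qed

lemma G_nonneg: "0 \<le> T (Pt p 0) x"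
proof -
  have "lin 0 \<le> T (Pt p 0)" by (simp add: lin_le_TP)
  thus ?thesis by (auto simp: le_fun_def lin_def zero_ereal_def dest!: spec[of _ x])
qed

lemma G_01:
  assumes p: "p \<noteq> 0" and fin: "T (Pt p 0) x \<noteq> \<infinity>"
  shows "T (Pt p 0) x = 0"
proof -
  let ?G = "T (Pt p 0)"
  obtain x0 where x0: "?G x0 \<noteq> \<infinity>" using Cvx_fin[OF TP_Cvx] by blast
  have "(\<lambda>x. ?G x + ?G x) \<in> T ` Cvx" using sum_in[OF Pt_Cvx Pt_Cvx x0 x0] .
  then obtain \<psi> where psi: "\<psi> \<in> Cvx" "(\<lambda>x. ?G x + ?G x) = T \<psi>" by blast
  have "?G \<le> T \<psi>" unfolding psi(2)[symmetric]
    by (rule le_funI) (simp add: G_nonneg add_increasing2)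
  hence "Pt p 0 \<le> \<psi>" using order_iso[OF Pt_Cvx psi(1)] by simp
  from above_Pt[OF psi(1) this] obtain s' where ps: "\<psi> = Pt p s'" "0 \<le> s'" by blast
  have eq: "?G x + ?G x = ?G x + ereal (s' * lp p x)" for x
    using shift[OF p ps(2), of 0] psi(2) ps(1) by (metis add_0)
  have fin_eq: "?G y = ereal (s' * lp p y)" if "?G y \<noteq> \<infinity>" for y
  proof -
    have "?G y \<noteq> -\<infinity>" using Cvx_nm[OF TP_Cvx] .
    with that obtain v where "?G y = ereal v" by (cases "?G y") auto
    with eq[of y] show ?thesis by simp
  qed
  have "s' = 0"
  proof (rule ccontr)
    assume "s' \<noteq> 0"
    hence sp: "s' > 0" using ps by simp
    have pp: "inner p p > 0" using p by simp
    define y where "y = ((s' / 2) / inner p p) *\<^sub>R p"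
    have "\<not> lin y \<le> ?G" unfolding lin_le_TP using pp sp by (simp add: y_def)
    then obtain z where z: "?G z < lin y z" by (auto simp: le_fun_def not_le)
    have ly: "lin y z = ereal (s' / 2 * lp p z)" unfolding y_def by (rule lin_lp)
    hence "?G z \<noteq> \<infinity>" using z by auto
    hence gz: "?G z = ereal (s' * lp p z)" by (rule fin_eq)
    have "s' * lp p z < s' / 2 * lp p z" using z ly gz by simp
    moreover have "0 \<le> s' * lp p z" using G_nonneg[of p z] gz by simp
    moreover have "s' * lp p z = 2 * (s' / 2 * lp p z)" by simp
    ultimately show False by linarith
  qed
  thus ?thesis using fin_eq[OF fin] by simp
qed

lemma TP_formula:
  assumes p: "p \<noteq> 0"
  shows "T (Pt p s) x = (if T (Pt p 0) x = 0 then ereal (s * lp p x) else \<infinity>)"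
proof (cases "0 \<le> s")
  case True
  have "T (Pt p s) x = T (Pt p 0) x + ereal (s * lp p x)"
    using shift[OF p True, of 0] by simp
  thus ?thesis using G_01[OF p, of x] by (cases "T (Pt p 0) x = 0") auto
next
  case False
  have "T (Pt p 0) x = T (Pt p s) x + ereal (- s * lp p x)"
    using shift[OF p, of "- s" s] False by simp
  moreover have "T (Pt p s) x \<noteq> -\<infinity>" using Cvx_nm[OF TP_Cvx] .
  ultimately show ?thesis using G_01[OF p, of x]
    by (cases "T (Pt p s) x"; cases "T (Pt p 0) x = 0") auto
qed

end



lemma cst_apply[simp]: "cst c x = ereal c" by (simp add: cst_def)

context TT begin

lemma Tcst_m1: "\<exists>K. T (cst (-1)) = cst K"
proof -
  have "cst (-1) \<le> (cst 0 :: 'a \<Rightarrow> ereal)" by (simp add: le_fun_def)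
  hence "T (cst (-1)) \<le> T (cst 0)" using order_iso[OF cst_Cvx cst_Cvx] by blast
  hence "T (cst (-1)) \<le> cst 0" by (simp only: Tcst0)
  hence "\<And>x. T (cst (-1)) x \<le> 0" by (simp add: le_fun_def zero_ereal_def)
  thus ?thesis using bdd_const[OF maps[OF cst_Cvx]] by blast
qed

definition M where "M = - (SOME K. T (cst (-1)) = cst K)"

lemma TcstM: "T (cst (-1)) = cst (- M)"
  unfolding M_def using someI_ex[OF Tcst_m1] by simp

lemma M_upper:
  assumes p: "p \<noteq> 0" and G: "T (Pt p 0) x = 0"
  shows "lp p x \<le> M"
proof -
  have "cst (-1) \<le> Pt p (-1)" by (simp add: le_Pt)
  hence "T (cst (-1)) \<le> T (Pt p (-1))" using order_iso[OF cst_Cvx Pt_Cvx] by blast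
  hence "ereal (- M) \<le> T (Pt p (-1)) x" by (simp add: TcstM le_fun_def)
  thus ?thesis using TP_formula[OF p, of "-1" x] G by simp
qed

lemma M_lower:
  assumes p: "p \<noteq> 0" and u: "0 < u" "u < 1"
  shows "\<exists>x. T (Pt p 0) x = 0 \<and> M * u < lp p x"
proof -
  define \<sigma> where "\<sigma> = - 1 / u"
  have s: "\<sigma> < -1" using u by (simp add: \<sigma>_def field_simps)
  have "\<not> cst (-1) \<le> Pt p \<sigma>" using s by (simp add: le_Pt)
  hence "\<not> T (cst (-1)) \<le> T (Pt p \<sigma>)" using order_iso[OF cst_Cvx Pt_Cvx] by blast
  then obtain x where x: "T (Pt p \<sigma>) x < ereal (- M)"
    by (auto simp: TcstM le_fun_def not_le)
  hence G: "T (Pt p 0) x = 0" using TP_formula[OF p, of \<sigma> x] by (auto split: if_splits)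
  hence "\<sigma> * lp p x < - M" using x TP_formula[OF p, of \<sigma> x] by simp
  hence "- lp p x / u < - M" by (simp add: \<sigma>_def)
  hence "M * u < lp p x" using u by (simp add: field_simps)
  thus ?thesis using G by blast
qed

lemma M_pos: fixes p :: 'a assumes p: "p \<noteq> 0" shows "0 < M"
proof -
  obtain x where "T (Pt p 0) x = 0" "M * (1/2) < lp p x" using M_lower[OF p, of "1/2"] by auto
  moreover have "lp p x \<le> M" using M_upper[OF p] calculation(1) .
  ultimately show ?thesis by simp
qed

lemma G_conv:
  assumes "T (Pt p 0) x1 = 0" "T (Pt p 0) x2 = 0" "0 \<le> w" "w \<le> 1"
  shows "T (Pt p 0) ((1 - w) *\<^sub>R x1 + w *\<^sub>R x2) = 0"
proof -
  have "T (Pt p 0) ((1 - w) *\<^sub>R x1 + w *\<^sub>R x2) \<le> ereal ((1 - w) * 0 + w * 0)"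
    using assms by (intro cvx_ineq[OF TP_Cvx]) (auto simp: zero_ereal_def)
  thus ?thesis using G_nonneg[of p] by (simp add: zero_ereal_def order_antisym)
qed

lemma G_disj:
  assumes pq: "p \<noteq> q" and fp: "T (Pt p 0) x \<noteq> \<infinity>" and fq: "T (Pt q 0) x \<noteq> \<infinity>"
  shows False
proof -
  have "(\<lambda>x. T (Pt p 0) x + T (Pt q 0) x) \<in> T ` Cvx" using sum_in[OF Pt_Cvx Pt_Cvx fp fq] .
  then obtain \<psi> where psi: "\<psi> \<in> Cvx" "(\<lambda>x. T (Pt p 0) x + T (Pt q 0) x) = T \<psi>" by blast
  have "T (Pt p 0) \<le> T \<psi>" unfolding psi(2)[symmetric]
    by (rule le_funI) (simp add: G_nonneg add_increasing2)
  hence 1: "Pt p 0 \<le> \<psi>" using order_iso[OF Pt_Cvx psi(1)] by simp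
  have "T (Pt q 0) \<le> T \<psi>" unfolding psi(2)[symmetric]
    by (rule le_funI) (simp add: G_nonneg add_increasing)
  hence 2: "Pt q 0 \<le> \<psi>" using order_iso[OF Pt_Cvx psi(1)] by simp
  have "\<psi> y = \<infinity>" for y
  proof (cases "y = p")
    case True
    thus ?thesis using 2 pq by (auto simp: le_fun_def Pt_def dest!: spec[of _ p])
  next
    case False
    thus ?thesis using 1 by (auto simp: le_fun_def Pt_def dest!: spec[of _ y])
  qed
  thus False using Cvx_fin[OF psi(1)] by blast
qed

end



context TT begin

lemma G_ge_M:
  assumes p: "p \<noteq> 0" and x1: "T (Pt p 0) x1 = 0"
  shows "M \<le> lp p x1"
proof (rule ccontr)
  assume "\<not> M \<le> lp p x1"
  define t1 where "t1 = lp p x1"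
  have t1M: "t1 < M" using \<open>\<not> M \<le> lp p x1\<close> by (simp add: t1_def)
  have r1: "x1 = t1 *\<^sub>R p" "0 \<le> t1" using ray[OF p, of 0 x1] x1 by (auto simp: t1_def)
  have Mp: "0 < M" using M_pos[OF p] .
  define u where "u = (t1 + M) / (2 * M)"
  have u: "0 < u" "u < 1" using Mp t1M r1(2) by (auto simp: u_def field_simps)
  obtain x2 where x2: "T (Pt p 0) x2 = 0" "M * u < lp p x2" using M_lower[OF p u] by blast
  define t2 where "t2 = lp p x2"
  have r2: "x2 = t2 *\<^sub>R p" "0 \<le> t2" using ray[OF p, of 0 x2] x2 by (auto simp: t2_def)
  have t2M: "t2 \<le> M" using M_upper[OF p x2(1)] by (simp add: t2_def)
  have Mu: "M * u = (t1 + M) / 2" using Mp by (simp add: u_def field_simps)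
  have t12: "t1 < t2" using x2(2) Mu t1M by (simp add: t2_def)
  define lam where "lam = (t1 + t2) / (2 * M)"
  have lM: "lam * M = (t1 + t2) / 2" using Mp by (simp add: lam_def field_simps)
  have l: "0 < lam" "lam < 1" using Mp t12 t2M r1(2) t1M by (auto simp: lam_def field_simps)
  define q where "q = lam *\<^sub>R p"
  have q0: "q \<noteq> 0" using p l by (simp add: q_def)
  have qp: "q \<noteq> p"
  proof
    assume "q = p"
    hence "(lam - 1) *\<^sub>R p = 0" by (simp add: q_def algebra_simps)
    thus False using p l by simp
  qed
  define u' where "u' = (t1 / (lam * M) + 1) / 2"
  have lMpos: "0 < lam * M" using l Mp by simp
  have t1lM: "t1 < lam * M" using lM t12 by simp
  have "t1 / (lam * M) < 1" using t1lM lMpos by (simp add: field_simps)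
  moreover have "0 \<le> t1 / (lam * M)" using r1(2) lMpos by simp
  ultimately have u': "0 < u'" "u' < 1" by (auto simp: u'_def)
  obtain y where y: "T (Pt q 0) y = 0" "M * u' < lp q y" using M_lower[OF q0 u'] by blast
  define s where "s = lp q y"
  have ry: "y = s *\<^sub>R q" using ray[OF q0, of 0 y] y by (auto simp: s_def)
  have sM: "s \<le> M" using M_upper[OF q0 y(1)] by (simp add: s_def)
  define r where "r = s * lam"
  have yr: "y = r *\<^sub>R p" by (simp add: ry q_def r_def)
  have "r \<le> lam * M" using sM l by (simp add: r_def mult.commute mult_left_mono)
  hence rt2: "r < t2" using lM t12 by simp
  have "M * u' * lam < s * lam" using y(2) l by (simp add: s_def)
  moreover have "M * u' * lam = (t1 + lam * M) / 2" using l(1) Mp by (simp add: u'_def field_simps)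
  ultimately have rt1: "t1 < r" using t1lM by (simp add: r_def)
  define w where "w = (r - t1) / (t2 - t1)"
  have w: "0 \<le> w" "w \<le> 1" using rt1 rt2 t12 by (auto simp: w_def field_simps)
  have "(1 - w) * t1 + w * t2 = t1 + w * (t2 - t1)" by (simp add: algebra_simps)
  also have "w * (t2 - t1) = r - t1" using t12 by (simp add: w_def)
  finally have "(1 - w) * t1 + w * t2 = r" by simp
  hence "(1 - w) *\<^sub>R x1 + w *\<^sub>R x2 = y"
    by (simp add: r1(1) r2(1) yr scaleR_add_left[symmetric])
  hence "T (Pt p 0) y = 0" using G_conv[OF x1 x2(1) w] by simp
  thus False using G_disj[OF qp[symmetric], of y] y(1) by simp
qed

lemma G_char:
  assumes p: "p \<noteq> 0"
  shows "T (Pt p 0) x = 0 \<longleftrightarrow> x = M *\<^sub>R p"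
proof
  assume G: "T (Pt p 0) x = 0"
  have "lp p x = M" using M_upper[OF p G] G_ge_M[OF p G] by simp
  thus "x = M *\<^sub>R p" using ray[OF p, of 0 x] G by auto
next
  assume x: "x = M *\<^sub>R p"
  obtain z where z: "T (Pt p 0) z = 0" using M_lower[OF p, of "1/2"] by auto
  have "lp p z = M" using M_upper[OF p z] G_ge_M[OF p z] by simp
  hence "z = M *\<^sub>R p" using ray[OF p, of 0 z] z by auto
  thus "T (Pt p 0) x = 0" using z x by simp
qed

lemma TPt_nz:
  assumes p: "p \<noteq> 0"
  shows "T (Pt p s) = Pt (M *\<^sub>R p) (s * M)"
proof
  fix x
  show "T (Pt p s) x = Pt (M *\<^sub>R p) (s * M) x"
    using TP_formula[OF p, of s x] G_char[OF p, of x] p by (auto simp: Pt_def lp_self)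
qed

end



context TT begin

lemma M_pos0: "0 < M"
proof -
  obtain e :: 'a where "e \<in> Basis" using nonempty_Basis by blast
  hence "e \<noteq> 0" by (rule nonzero_Basis)
  thus ?thesis by (rule M_pos)
qed

lemma eval_at:
  assumes hyp: "\<And>s. T (Pt a s) = Pt (M *\<^sub>R a) (s * M)" and phi: "\<phi> \<in> Cvx"
  shows "T \<phi> (M *\<^sub>R a) = ereal M * \<phi> a"
proof (rule antisym)
  have Mp: "0 < M" by (rule M_pos0)
  show "T \<phi> (M *\<^sub>R a) \<le> ereal M * \<phi> a"
  proof (cases "\<phi> a = \<infinity>")
    case True thus ?thesis using Mp by simp
  next
    case False
    moreover have "\<phi> a \<noteq> -\<infinity>" using Cvx_nm[OF phi] .
    ultimately obtain v where v: "\<phi> a = ereal v" by (cases "\<phi> a") auto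
    hence "\<phi> \<le> Pt a v" by (simp add: le_Pt)
    hence "T \<phi> \<le> T (Pt a v)" using order_iso[OF phi Pt_Cvx] by blast
    hence "T \<phi> (M *\<^sub>R a) \<le> ereal (v * M)" by (simp add: hyp le_Pt)
    thus ?thesis using v by (simp add: mult.commute)
  qed
  show "ereal M * \<phi> a \<le> T \<phi> (M *\<^sub>R a)"
  proof (rule ccontr)
    assume "\<not> ereal M * \<phi> a \<le> T \<phi> (M *\<^sub>R a)"
    hence lt: "T \<phi> (M *\<^sub>R a) < ereal M * \<phi> a" by simp
    have "T \<phi> (M *\<^sub>R a) \<noteq> -\<infinity>" using Cvx_nm[OF maps[OF phi]] .
    moreover have "T \<phi> (M *\<^sub>R a) \<noteq> \<infinity>" using lt by auto
    ultimately obtain w where w: "T \<phi> (M *\<^sub>R a) = ereal w" by (cases "T \<phi> (M *\<^sub>R a)") auto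
    have "T \<phi> \<le> Pt (M *\<^sub>R a) ((w / M) * M)" using w Mp by (simp add: le_Pt)
    hence "T \<phi> \<le> T (Pt a (w / M))" by (simp add: hyp)
    hence "\<phi> \<le> Pt a (w / M)" using order_iso[OF phi Pt_Cvx] by blast
    hence pa: "\<phi> a \<le> ereal (w / M)" by (simp add: le_Pt)
    have "\<phi> a \<noteq> -\<infinity>" using Cvx_nm[OF phi] .
    with pa obtain v where v: "\<phi> a = ereal v" "v \<le> w / M" by (cases "\<phi> a") auto
    have "M * v \<le> w" using v(2) Mp by (simp add: field_simps)
    thus False using lt w v(1) by simp
  qed
qed

lemma eval_nz: assumes "x \<noteq> 0" "\<phi> \<in> Cvx" shows "T \<phi> x = ereal M * \<phi> ((1 / M) *\<^sub>R x)"
proof -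
  have Mp: "0 < M" by (rule M_pos0)
  have "(1 / M) *\<^sub>R x \<noteq> 0" using assms Mp by simp
  from eval_at[OF TPt_nz[OF this] assms(2)] show ?thesis using Mp by simp
qed

lemma Tcst: "T (cst c) = cst (M * c)"
proof
  fix x
  have Mp: "0 < M" by (rule M_pos0)
  let ?f = "T (cst c)"
  have nz: "?f y = ereal (M * c)" if "y \<noteq> 0" for y
    using eval_nz[OF that cst_Cvx] by simp
  show "?f x = cst (M * c) x"
  proof (cases "x = 0")
    case False thus ?thesis using nz by simp
  next
    case True
    obtain e :: 'a where "e \<in> Basis" using nonempty_Basis by blast
    hence e: "e \<noteq> 0" by (rule nonzero_Basis)
    have "?f ((1 - 1/2) *\<^sub>R e + (1/2) *\<^sub>R (- e)) \<le> ereal ((1 - 1/2) * (M * c) + (1/2) * (M * c))"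
      using e by (intro cvx_ineq[OF maps[OF cst_Cvx]]) (auto simp: nz)
    hence f0: "?f 0 \<le> ereal (M * c)" by (simp add: algebra_simps)
    have "?f 0 \<noteq> -\<infinity>" using Cvx_nm[OF maps[OF cst_Cvx]] .
    with f0 obtain a0 where a0: "?f 0 = ereal a0" "a0 \<le> M * c" by (cases "?f 0") auto
    have "?f ((1 - 1/2) *\<^sub>R 0 + (1/2) *\<^sub>R (2 *\<^sub>R e)) \<le> ereal ((1 - 1/2) * a0 + (1/2) * (M * c))"
      using e a0 by (intro cvx_ineq[OF maps[OF cst_Cvx]]) (auto simp: nz)
    hence "ereal (M * c) \<le> ereal ((1 - 1/2) * a0 + (1/2) * (M * c))" using nz[OF e] by simp
    hence "M * c \<le> a0" by simp
    thus ?thesis using a0 True by simp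
  qed
qed

lemma TPt0: "T (Pt 0 s) = Pt (M *\<^sub>R 0) (s * M)"
proof -
  have Mp: "0 < M" by (rule M_pos0)
  let ?f = "T (Pt 0 s)"
  have inf: "?f y = \<infinity>" if y: "y \<noteq> 0" for y
  proof (rule ccontr)
    assume "?f y \<noteq> \<infinity>"
    moreover have "?f y \<noteq> -\<infinity>" using Cvx_nm[OF TP_Cvx] .
    ultimately obtain v where v: "?f y = ereal v" by (cases "?f y") auto
    have y': "(1/M) *\<^sub>R y \<noteq> 0" using y Mp by simp
    have "?f \<le> Pt y v" using v by (simp add: le_Pt)
    also have "Pt y v = T (Pt ((1/M) *\<^sub>R y) (v / M))" using TPt_nz[OF y'] Mp by simp
    finally have "Pt 0 s \<le> Pt ((1/M) *\<^sub>R y) (v / M)" using order_iso[OF Pt_Cvx Pt_Cvx] by blast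
    thus False using y' unfolding le_Pt by (simp add: Pt_def)
  qed
  obtain z where "?f z \<noteq> \<infinity>" using Cvx_fin[OF TP_Cvx] by blast
  with inf have f0: "?f 0 \<noteq> \<infinity>" by metis
  moreover have "?f 0 \<noteq> -\<infinity>" using Cvx_nm[OF TP_Cvx] .
  ultimately obtain r where r: "?f 0 = ereal r" by (cases "?f 0") auto
  have key: "c \<le> s \<longleftrightarrow> M * c \<le> r" for c
  proof -
    have "c \<le> s \<longleftrightarrow> cst c \<le> Pt (0::'a) s" by (simp add: le_Pt)
    also have "\<dots> \<longleftrightarrow> T (cst c) \<le> ?f" using order_iso[OF cst_Cvx Pt_Cvx] by blast
    also have "\<dots> \<longleftrightarrow> M * c \<le> r"
      unfolding Tcst le_fun_def using inf r by (metis cst_apply ereal_less_eq(1) ereal_less_eq(3))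
    finally show ?thesis .
  qed
  have "M * s \<le> r" using key[of s] by simp
  moreover have "r \<le> M * s"
  proof -
    have "r / M \<le> s" using key[of "r / M"] Mp by simp
    thus ?thesis using Mp by (simp add: field_simps)
  qed
  ultimately have "r = s * M" by (simp add: mult.commute)
  hence "?f = Pt 0 (s * M)" using inf r by (auto simp: Pt_def fun_eq_iff)
  thus ?thesis by simp
qed

lemma TPt: "T (Pt a s) = Pt (M *\<^sub>R a) (s * M)"
  using TPt0 TPt_nz by (cases "a = 0") auto

lemma main: "\<exists>C::real. C > 0 \<and> (\<forall>\<phi>\<in>Cvx. \<forall>x. T \<phi> x = ereal (1 / C) * \<phi> (C *\<^sub>R x))"
proof (intro exI[of _ "1 / M"] conjI ballI allI)
  have Mp: "0 < M" by (rule M_pos0)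
  show "0 < 1 / M" using Mp by simp
  fix \<phi> :: "'a \<Rightarrow> ereal" and x :: 'a assume phi: "\<phi> \<in> Cvx"
  have "T \<phi> (M *\<^sub>R ((1 / M) *\<^sub>R x)) = ereal M * \<phi> ((1 / M) *\<^sub>R x)" by (rule eval_at[OF TPt phi])
  thus "T \<phi> x = ereal (1 / (1 / M)) * \<phi> ((1 / M) *\<^sub>R x)" using Mp by simp
qed

end

theorem theorem1p4:
  fixes T :: "(real ^ 'n \<Rightarrow> ereal) \<Rightarrow> (real ^ 'n \<Rightarrow> ereal)"
  assumes maps: "\<And>\<phi>. \<phi> \<in> Cvx \<Longrightarrow> T \<phi> \<in> Cvx"
    and order_iso: "\<And>\<phi> \<psi>. \<phi> \<in> Cvx \<Longrightarrow> \<psi> \<in> Cvx \<Longrightarrow> (\<phi> \<le> \<psi> \<longleftrightarrow> T \<phi> \<le> T \<psi>)"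
    and homog_fixed: "\<And>\<phi>. \<phi> \<in> Cvx \<Longrightarrow> pos_homogeneous \<phi> \<Longrightarrow> T \<phi> = \<phi>"
    and image_add: "\<And>\<phi>' \<psi>'. \<phi>' \<in> T ` Cvx \<Longrightarrow> \<psi>' \<in> T ` Cvx \<Longrightarrow>
                      (\<exists>x. \<phi>' x + \<psi>' x \<noteq> \<infinity>) \<Longrightarrow> (\<lambda>x. \<phi>' x + \<psi>' x) \<in> T ` Cvx"
  shows "\<exists>C::real. C > 0 \<and>
           (\<forall>\<phi>\<in>Cvx. \<forall>x. T \<phi> x = ereal (1 / C) * \<phi> (C *\<^sub>R x))"
proof -
  interpret TT T
    by (rule TT.intro[OF maps order_iso homog_fixed image_add])
  show ?thesis by (rule main)
qed

end
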